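(* Let $\mathcal{G}=(\mathcal{V},\mathcal{E},\mathbf{W})$ be a weighted undirected graph with symmetric nonnegative weights, and let $\mathcal{F}=\{\mathcal{C}_1,\dots,\mathcal{C}_{|\mathcal{F}|}\}$ be a partition of $\mathcal{V}$ into pairwise disjoint clusters. Let $x:\mathcal{V}\to\mathbb{R}$ be any graph signal observed on a sampling set $\mathcal{M}\subseteq\mathcal{V}$. Suppose $\|u\|_{\mathcal{E}\setminus\partial\mathcal{F}}\ge 2\|u\|_{\partial\mathcal{F}}$ for every $u:\mathcal{V}\to\mathbb{R}$ with $u[i]=0$ for all $i\in\mathcal{M}$. Then every solution $\hat{x}$ of $$\min_{\tilde{x}:\mathcal{V}\to\mathbb{R}}\|\tilde{x}\|_{\rm TV}\quad\text{subject to}\quad\tilde{x}[i]=x[i]\ \text{for all } i\in\mathcal{M}$$ satisfies $$\|x-\hat{x}\|_{\rm TV}\le 6\min_{a_1,\dots,a_{|\mathcal{F}|}\in\mathbb{R}}\Big\|x-\sum_{l=1}^{|\mathcal{F}|}a_l\mathcal{I}_{\mathcal{C}_l}\Big\|_{\rm TV}.$$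
   Context: $\mathcal{I}_{\mathcal{C}}[i]=1$ if $i\in\mathcal{C}$ and $0$ otherwise. For a set of edges $\mathcal{S}\subseteq\mathcal{E}$ and a signal $x:\mathcal{V}\to\mathbb{R}$, $\|x\|_{\mathcal{S}}=\sum_{\{i,j\}\in\mathcal{S}}W_{i,j}|x[i]-x[j]|$, and $\|x\|_{\rm TV}=\|x\|_{\mathcal{E}}$. The boundary of the partition is $\partial\mathcal{F}=\{\{i,j\}\in\mathcal{E}: i\in\mathcal{C}_l, j\in\mathcal{C}_{l'}, l\neq l'\}$. *)

theory Defs
  imports Main "HOL-Library.Indicator_Function"
begin

(* An undirected edge is a two-element set {i,j}.  Its contribution W i j * |x i - x j|
   is computed symmetrically: averaging over both orientations (equal when W is symmetric). *)
definition edge_term :: "('a \<Rightarrow> 'a \<Rightarrow> real) \<Rightarrow> ('a \<Rightarrow> real) \<Rightarrow> 'a set \<Rightarrow> real" where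
  "edge_term W x e = (\<Sum>(i,j) \<in> {(i,j). e = {i,j} \<and> i \<noteq> j}. W i j * \<bar>x i - x j\<bar>) / 2"

definition edge_norm :: "('a \<Rightarrow> 'a \<Rightarrow> real) \<Rightarrow> 'a set set \<Rightarrow> ('a \<Rightarrow> real) \<Rightarrow> real" where
  "edge_norm W S x = (\<Sum>e\<in>S. edge_term W x e)"

definition wgraph :: "'a set \<Rightarrow> 'a set set \<Rightarrow> ('a \<Rightarrow> 'a \<Rightarrow> real) \<Rightarrow> bool" where
  "wgraph V E W \<longleftrightarrow> finite V \<and> (\<forall>e\<in>E. \<exists>i j. i \<in> V \<and> j \<in> V \<and> i \<noteq> j \<and> e = {i,j})
     \<and> (\<forall>i j. W i j = W j i) \<and> (\<forall>i j. 0 \<le> W i j)"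

definition is_partition :: "'a set \<Rightarrow> 'a set set \<Rightarrow> bool" where
  "is_partition V F \<longleftrightarrow> \<Union>F = V \<and> (\<forall>C\<in>F. C \<noteq> {}) \<and>
     (\<forall>C\<in>F. \<forall>C'\<in>F. C \<noteq> C' \<longrightarrow> C \<inter> C' = {})"

definition boundary :: "'a set set \<Rightarrow> 'a set set \<Rightarrow> 'a set set" where
  "boundary E F = {e \<in> E. \<exists>i j C C'. e = {i,j} \<and> C \<in> F \<and> C' \<in> F \<and> i \<in> C \<and> j \<in> C' \<and> C \<noteq> C'}"

end

theory Submission
  imports Defs
begin

lemma et_tri:
  assumes W: "\<forall>i j. 0 \<le> W i j"
    and pt: "\<And>i j. e = {i,j} \<Longrightarrow> i \<noteq> j \<Longrightarrow> \<bar>a i - a j\<bar> \<le> \<bar>b i - b j\<bar> + \<bar>c i - c j\<bar>"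
  shows "edge_term W a e \<le> edge_term W b e + edge_term W c e"
proof -
  let ?P = "{(i,j). e = {i,j} \<and> i \<noteq> j}"
  have "(\<Sum>(i,j) \<in> ?P. W i j * \<bar>a i - a j\<bar>) \<le>
        (\<Sum>(i,j) \<in> ?P. W i j * \<bar>b i - b j\<bar> + W i j * \<bar>c i - c j\<bar>)"
  proof (rule sum_mono)
    fix p assume "p \<in> ?P"
    then obtain i j where p: "p = (i,j)" "e = {i,j}" "i \<noteq> j" by auto
    have "W i j * \<bar>a i - a j\<bar> \<le> W i j * (\<bar>b i - b j\<bar> + \<bar>c i - c j\<bar>)"
      using pt[OF p(2,3)] W by (simp add: mult_left_mono)
    then show "(case p of (i,j) \<Rightarrow> W i j * \<bar>a i - a j\<bar>) \<le>
       (case p of (i,j) \<Rightarrow> W i j * \<bar>b i - b j\<bar> + W i j * \<bar>c i - c j\<bar>)"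
      using p by (simp add: distrib_left)
  qed
  also have "\<dots> = (\<Sum>(i,j) \<in> ?P. W i j * \<bar>b i - b j\<bar>) + (\<Sum>(i,j) \<in> ?P. W i j * \<bar>c i - c j\<bar>)"
    by (simp add: sum.distrib split_def)
  finally show ?thesis unfolding edge_term_def by (simp add: add_divide_distrib divide_right_mono)
qed

lemma et_nonneg:
  assumes W: "\<forall>i j. 0 \<le> W i j"
  shows "0 \<le> edge_term W a e"
  unfolding edge_term_def using W by (auto intro!: sum_nonneg divide_nonneg_pos)

lemma en_tri:
  assumes W: "\<forall>i j. 0 \<le> W i j"
    and pt: "\<And>e i j. e \<in> S \<Longrightarrow> e = {i,j} \<Longrightarrow> i \<noteq> j \<Longrightarrow> \<bar>a i - a j\<bar> \<le> \<bar>b i - b j\<bar> + \<bar>c i - c j\<bar>"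
  shows "edge_norm W S a \<le> edge_norm W S b + edge_norm W S c"
proof -
  have "edge_norm W S a \<le> (\<Sum>e\<in>S. edge_term W b e + edge_term W c e)"
    unfolding edge_norm_def by (rule sum_mono, rule et_tri[OF W], rule pt) auto
  then show ?thesis unfolding edge_norm_def by (simp add: sum.distrib)
qed

lemma en_nonneg:
  assumes W: "\<forall>i j. 0 \<le> W i j"
  shows "0 \<le> edge_norm W S a"
  unfolding edge_norm_def using et_nonneg[OF W] by (simp add: sum_nonneg)

lemma en_split:
  assumes "finite E" "S \<subseteq> E"
  shows "edge_norm W E a = edge_norm W (E - S) a + edge_norm W S a"
  unfolding edge_norm_def using assms by (metis sum.subset_diff)

theorem lemma2:
  fixes V :: "'a set" and E :: "'a set set" and W :: "'a \<Rightarrow> 'a \<Rightarrow> real"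
    and F :: "'a set set" and M :: "'a set" and x xhat :: "'a \<Rightarrow> real"
  assumes "wgraph V E W"
    and "is_partition V F"
    and "M \<subseteq> V"
    and nsp: "\<forall>u :: 'a \<Rightarrow> real. (\<forall>i\<in>M. u i = 0) \<longrightarrow>
              edge_norm W (E - boundary E F) u \<ge> 2 * edge_norm W (boundary E F) u"
    and feas: "\<forall>i\<in>M. xhat i = x i"
    and opt: "\<forall>y :: 'a \<Rightarrow> real. (\<forall>i\<in>M. y i = x i) \<longrightarrow> edge_norm W E xhat \<le> edge_norm W E y"
  shows "edge_norm W E (\<lambda>i. x i - xhat i) \<le>
         6 * (INF a :: 'a set \<Rightarrow> real. edge_norm W E (\<lambda>i. x i - (\<Sum>C\<in>F. a C * indicator C i)))"
proof -
  have W: "\<forall>i j. 0 \<le> W i j" using assms(1) unfolding wgraph_def by auto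
  have EV: "\<forall>e\<in>E. \<exists>i j. i \<in> V \<and> j \<in> V \<and> i \<noteq> j \<and> e = {i,j}" and fV: "finite V"
    using assms(1) unfolding wgraph_def by auto
  have "E \<subseteq> Pow V" using EV by auto
  then have fE: "finite E" using fV by (meson finite_Pow_iff finite_subset)
  have Pcov: "\<Union>F = V" and Pdis: "\<forall>C\<in>F. \<forall>C'\<in>F. C \<noteq> C' \<longrightarrow> C \<inter> C' = {}"
    using assms(2) unfolding is_partition_def by auto
  let ?S = "boundary E F" and ?T = "E - boundary E F"
  have SE: "?S \<subseteq> E" unfolding boundary_def by auto
  define u where "u = (\<lambda>i. x i - xhat i)"
  have u0: "\<forall>i\<in>M. u i = 0" using feas u_def by auto
  have A: "edge_norm W E xhat \<le> edge_norm W E x" using opt by auto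
  have key: "edge_norm W E u \<le> 6 * edge_norm W E (\<lambda>i. x i - (\<Sum>C\<in>F. a C * indicator C i))" for a
  proof -
    define z where "z = (\<lambda>i. (\<Sum>C\<in>F. a C * indicator C i))"
    define v where "v = (\<lambda>i. x i - z i)"
    have zc: "z i = z j" if "e \<in> ?T" "e = {i,j}" for e i j
    proof -
      have eE: "e \<in> E" using that(1) by simp
      obtain p q where pq: "p \<in> V" "q \<in> V" "e = {p,q}" using EV eE by blast
      obtain C where C: "C \<in> F" "p \<in> C" using pq(1) Pcov by blast
      obtain C' where C': "C' \<in> F" "q \<in> C'" using pq(2) Pcov by blast
      have "C = C'"
      proof (rule ccontr)
        assume ne: "C \<noteq> C'"
        have "\<exists>i j D D'. e = {i,j} \<and> D \<in> F \<and> D' \<in> F \<and> i \<in> D \<and> j \<in> D' \<and> D \<noteq> D'"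
          using pq(3) C C' ne by (intro exI[of _ p] exI[of _ q] exI[of _ C] exI[of _ C']) simp
        then have "e \<in> ?S" unfolding boundary_def using eE by simp
        then show False using that(1) by simp
      qed
      then have pqC: "p \<in> C" "q \<in> C" using C C' by auto
      have "i \<in> {p,q}" "j \<in> {p,q}" using that(2) pq(3) by auto
      then have ij: "i \<in> C" "j \<in> C" using pqC by auto
      have ind: "indicator D i = (indicator D j :: real)" if "D \<in> F" for D
      proof (cases "D = C")
        case True then show ?thesis using ij by simp
      next
        case False
        then have "D \<inter> C = {}" using Pdis that C(1) by blast
        then show ?thesis using ij by (auto simp: indicator_def)
      qed
      show ?thesis unfolding z_def by (rule sum.cong) (simp_all add: ind)
    qed
    have xT': "edge_norm W ?T x \<le> edge_norm W ?T v + edge_norm W ?T (\<lambda>_. 0)"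
      apply (rule en_tri[OF W])
      subgoal for e i j using zc[of e i j] by (simp add: v_def)
      done
    have zero: "edge_norm W S (\<lambda>_. 0) = 0" for S
      unfolding edge_norm_def edge_term_def by simp
    have uT: "edge_norm W ?T u \<le> edge_norm W ?T xhat + edge_norm W ?T v"
      apply (rule en_tri[OF W])
      subgoal for e i j using zc[of e i j] abs_triangle_ineq4[of "v i - v j" "xhat i - xhat j"] by (simp add: v_def u_def algebra_simps)
      done
    have xS: "edge_norm W ?S x \<le> edge_norm W ?S xhat + edge_norm W ?S u"
      apply (rule en_tri[OF W])
      subgoal for e i j using abs_triangle_ineq[of "xhat i - xhat j" "u i - u j"] by (simp add: u_def algebra_simps)
      done
    have n: "edge_norm W ?T u \<ge> 2 * edge_norm W ?S u" using nsp u0 by blast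
    have s1: "edge_norm W E xhat = edge_norm W ?T xhat + edge_norm W ?S xhat"
      by (rule en_split[OF fE SE])
    have s2: "edge_norm W E x = edge_norm W ?T x + edge_norm W ?S x"
      by (rule en_split[OF fE SE])
    have s3: "edge_norm W E u = edge_norm W ?T u + edge_norm W ?S u"
      by (rule en_split[OF fE SE])
    have s4: "edge_norm W E v = edge_norm W ?T v + edge_norm W ?S v"
      by (rule en_split[OF fE SE])
    have "0 \<le> edge_norm W ?S v" by (rule en_nonneg[OF W])
    then have "edge_norm W E u \<le> 6 * edge_norm W E v"
      using A xT' zero[of ?T] uT xS n s1 s2 s3 s4 by linarith
    then show ?thesis unfolding u_def v_def z_def by simp
  qed
  have "edge_norm W E u / 6 \<le> (INF a :: 'a set \<Rightarrow> real. edge_norm W E (\<lambda>i. x i - (\<Sum>C\<in>F. a C * indicator C i)))"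
    by (rule cINF_greatest) (use key in \<open>auto simp: mult.commute\<close>)
  then show ?thesis unfolding u_def by simp
qed

end
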